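(* Let $G^\sigma$ be a connected oriented graph of order $n\geq 5$. Then $sr(G^\sigma)=2$ if and only if the underlying graph of $G^\sigma$ is a complete bipartite graph or a complete tripartite graph and every cycle of length $4$ in $G^\sigma$ is evenly-oriented.
   Context: An oriented graph $G^\sigma$ is a simple graph $G$ (underlying graph) together with an orientation of each edge. Its skew-adjacency matrix $S(G^\sigma)=(s_{ij})$ has $s_{ij}=1$ if there is an arc from $v_i$ to $v_j$, $s_{ij}=-1$ if there is an arc from $v_j$ to $v_i$, and $0$ otherwise; the skew-rank $sr(G^\sigma)$ is the rank of $S(G^\sigma)$. For an even cycle $u_1\cdots u_ku_1$, its sign is the sign of $\prod_{i=1}^k s_{u_iu_{i+1}}$ ($u_{k+1}=u_1$); the cycle is evenly-oriented if this sign is positive and oddly-oriented if negative. *)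

theory Defs
  imports "HOL-Analysis.Analysis"
begin

text \<open>An oriented graph on the finite vertex type 'n is given by its arc relation
  A: A u v means there is an arc from u to v.\<close>

definition oriented_graph :: "('n \<Rightarrow> 'n \<Rightarrow> bool) \<Rightarrow> bool" where
  "oriented_graph A \<longleftrightarrow> (\<forall>u. \<not> A u u) \<and> (\<forall>u v. A u v \<longrightarrow> \<not> A v u)"

definition underlying :: "('n \<Rightarrow> 'n \<Rightarrow> bool) \<Rightarrow> 'n \<Rightarrow> 'n \<Rightarrow> bool" where
  "underlying A u v \<longleftrightarrow> A u v \<or> A v u"

definition skew_entry :: "('n \<Rightarrow> 'n \<Rightarrow> bool) \<Rightarrow> 'n \<Rightarrow> 'n \<Rightarrow> real" where
  "skew_entry A u v = (if A u v then 1 else if A v u then -1 else 0)"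

definition skew_adj :: "('n::finite \<Rightarrow> 'n \<Rightarrow> bool) \<Rightarrow> real^'n^'n" where
  "skew_adj A = (\<chi> i j. skew_entry A i j)"

definition skew_rank :: "('n::finite \<Rightarrow> 'n \<Rightarrow> bool) \<Rightarrow> nat" where
  "skew_rank A = rank (skew_adj A)"

definition connected_graph :: "('n \<Rightarrow> 'n \<Rightarrow> bool) \<Rightarrow> bool" where
  "connected_graph E \<longleftrightarrow> (\<forall>u v. E\<^sup>*\<^sup>* u v)"

definition complete_multipartite :: "nat \<Rightarrow> ('n \<Rightarrow> 'n \<Rightarrow> bool) \<Rightarrow> bool" where
  "complete_multipartite k E \<longleftrightarrow>
     (\<exists>c :: 'n \<Rightarrow> nat. range c = {0..<k} \<and> (\<forall>u v. E u v \<longleftrightarrow> c u \<noteq> c v))"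

abbreviation complete_bipartite :: "('n \<Rightarrow> 'n \<Rightarrow> bool) \<Rightarrow> bool" where
  "complete_bipartite E \<equiv> complete_multipartite 2 E"

abbreviation complete_tripartite :: "('n \<Rightarrow> 'n \<Rightarrow> bool) \<Rightarrow> bool" where
  "complete_tripartite E \<equiv> complete_multipartite 3 E"

definition is_4cycle :: "('n \<Rightarrow> 'n \<Rightarrow> bool) \<Rightarrow> 'n \<Rightarrow> 'n \<Rightarrow> 'n \<Rightarrow> 'n \<Rightarrow> bool" where
  "is_4cycle A u1 u2 u3 u4 \<longleftrightarrow> distinct [u1, u2, u3, u4] \<and>
     underlying A u1 u2 \<and> underlying A u2 u3 \<and> underlying A u3 u4 \<and> underlying A u4 u1"

definition evenly_oriented_4cycle :: "('n \<Rightarrow> 'n \<Rightarrow> bool) \<Rightarrow> 'n \<Rightarrow> 'n \<Rightarrow> 'n \<Rightarrow> 'n \<Rightarrow> bool" where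
  "evenly_oriented_4cycle A u1 u2 u3 u4 \<longleftrightarrow>
     skew_entry A u1 u2 * skew_entry A u2 u3 * skew_entry A u3 u4 * skew_entry A u4 u1 > 0"

end

theory Submission imports Defs begin
lemma span2_coeffs:
  fixes x a b :: "'a::real_vector"
  assumes "x \<in> span {a, b}"
  shows "\<exists>\<alpha> \<beta>. x = \<alpha> *\<^sub>R a + \<beta> *\<^sub>R b"
proof -
  from assms obtain k where "x - k *\<^sub>R a \<in> span {b}" by (auto simp: span_insert)
  then obtain l where "x - k *\<^sub>R a = l *\<^sub>R b" by (auto simp: span_singleton)
  then have "x = k *\<^sub>R a + l *\<^sub>R b" by (simp add: algebra_simps)
  then show ?thesis by blast
qed

lemma indep2:
  fixes M :: "real^'n^'n"
  assumes skew: "\<And>i j. M$i$j = - M$j$i" and ab: "M$a$b \<noteq> 0"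
  shows "independent {row a M, row b M}" and "row a M \<noteq> row b M"
proof -
  have aa1: "M$a$a = 0" using skew[of a a] by linarith
  have aa2: "M$b$b = 0" using skew[of b b] by linarith
  note aa = aa1 aa2
  have ba: "M$b$a \<noteq> 0" using skew[of b a] ab by linarith
  show ne: "row a M \<noteq> row b M"
  proof
    assume "row a M = row b M"
    then have "row a M $ a = row b M $ a" by simp
    then show False using aa ba by (simp add: row_def)
  qed
  have rb0: "row b M \<noteq> 0"
  proof
    assume "row b M = 0"
    then have "row b M $ a = 0" by simp
    then show False using ba by (simp add: row_def)
  qed
  have "row a M \<notin> span {row b M}"
  proof
    assume "row a M \<in> span {row b M}"
    then obtain k where k: "row a M = k *\<^sub>R row b M" by (auto simp: span_singleton)
    then have "row a M $ a = k * row b M $ a" by simp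
    then have "k = 0" using aa ba by (simp add: row_def)
    then have "row a M $ b = 0" using k by simp
    then show False using ab by (simp add: row_def)
  qed
  then show "independent {row a M, row b M}"
    using rb0 ne by (simp add: independent_insert)
qed

lemma rank2_pluecker:
  fixes M :: "real^'n^'n"
  assumes skew: "\<And>i j. M$i$j = - M$j$i" and ab: "M$a$b \<noteq> 0"
    and rk: "rank M \<le> 2"
  shows "M$i$j * M$a$b = M$i$a * M$j$b - M$i$b * M$j$a"
proof -
  have aa1: "M$a$a = 0" using skew[of a a] by linarith
  have aa2: "M$b$b = 0" using skew[of b b] by linarith
  note aa = aa1 aa2
  note ind = indep2[OF skew ab]
  have "row i M \<in> span {row a M, row b M}"
  proof (rule ccontr)
    assume nin: "row i M \<notin> span {row a M, row b M}"
    have hab: "row a M \<in> span {row a M, row b M}" "row b M \<in> span {row a M, row b M}"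
      by (auto intro: span_base)
    have ni: "row i M \<notin> {row a M, row b M}" using nin hab by auto
    have indp: "independent (insert (row i M) {row a M, row b M})"
      using nin ind(1) by (rule independent_insertI)
    have subs: "insert (row i M) {row a M, row b M} \<subseteq> rows M"
      by (auto simp: rows_def)
    have "card (insert (row i M) {row a M, row b M}) \<le> dim (rows M)"
      by (rule independent_card_le_dim[OF subs indp])
    moreover have "card (insert (row i M) {row a M, row b M}) = 3"
      using ni ind(2) by (simp add: card_insert_disjoint)
    moreover have "rank M = dim (rows M)" by (rule row_rank_def)
    ultimately show False using rk by linarith
  qed
  then obtain \<alpha> \<beta> where e: "row i M = \<alpha> *\<^sub>R row a M + \<beta> *\<^sub>R row b M"
    using span2_coeffs by blast
  have c: "\<And>k. M$i$k = \<alpha> * M$a$k + \<beta> * M$b$k"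
  proof -
    fix k have "row i M $ k = (\<alpha> *\<^sub>R row a M + \<beta> *\<^sub>R row b M) $ k" using e by simp
    then show "M$i$k = \<alpha> * M$a$k + \<beta> * M$b$k" by (simp add: row_def)
  qed
  have ia: "M$i$a = \<beta> * M$b$a" using c[of a] aa by simp
  have ib: "M$i$b = \<alpha> * M$a$b" using c[of b] aa by simp
  have "M$i$j * M$a$b = \<alpha> * M$a$b * M$a$j + \<beta> * M$a$b * M$b$j"
    using c[of j] by (simp add: algebra_simps)
  also have "\<dots> = M$i$a * M$j$b - M$i$b * M$j$a"
  proof -
    have t: "M$b$a = - M$a$b" "M$j$b = - M$b$j" "M$j$a = - M$a$j" by (rule skew)+
    show ?thesis unfolding ia ib t by (simp add: algebra_simps)
  qed
  finally show ?thesis .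
qed

lemma pluecker_rank2:
  fixes M :: "real^'n^'n"
  assumes skew: "\<And>i j. M$i$j = - M$j$i" and ab: "M$a$b \<noteq> 0"
    and pl: "\<And>i j. M$i$j * M$a$b = M$i$a * M$j$b - M$i$b * M$j$a"
  shows "rank M = 2"
proof -
  note ind = indep2[OF skew ab]
  have sub: "{row a M, row b M} \<subseteq> rows M" by (auto simp: rows_def)
  have c2: "card {row a M, row b M} = 2" using ind(2) by simp
  have "2 \<le> dim (rows M)"
    using independent_card_le_dim[OF sub ind(1)] c2 by linarith
  moreover have "rows M \<subseteq> span {row a M, row b M}"
  proof
    fix r assume "r \<in> rows M"
    then obtain i where r: "r = row i M" by (auto simp: rows_def)
    have "r = (M$i$b / M$a$b) *\<^sub>R row a M + (- M$i$a / M$a$b) *\<^sub>R row b M"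
    proof (rule vec_eq_iff[THEN iffD2], rule allI)
      fix j
      show "r $ j = ((M$i$b / M$a$b) *\<^sub>R row a M + (- M$i$a / M$a$b) *\<^sub>R row b M) $ j"
      proof -
        define d where "d = M$a$b"
        have d0: "d \<noteq> 0" using ab d_def by simp
        have s1: "M$j$b = - M$b$j" "M$j$a = - M$a$j" by (rule skew)+
        have "M$i$j * d = M$i$b * M$a$j - M$i$a * M$b$j"
          using pl[of i j] unfolding s1 d_def by (simp add: algebra_simps)
        then have "M$i$j = (M$i$b * M$a$j - M$i$a * M$b$j) / d"
          using d0 by (simp add: eq_divide_eq)
        also have "\<dots> = M$i$b / d * M$a$j + (- M$i$a / d) * M$b$j"
          by (simp add: diff_divide_distrib)
        finally show ?thesis using r unfolding d_def by (simp add: row_def)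
      qed
    qed
    moreover have ha: "row a M \<in> span {row a M, row b M}" "row b M \<in> span {row a M, row b M}"
      by (auto intro: span_base)
    ultimately show "r \<in> span {row a M, row b M}"
      using span_add[OF span_scale[OF ha(1), of "M$i$b / M$a$b"] span_scale[OF ha(2), of "- M$i$a / M$a$b"]]
      by simp
  qed
  then have "dim (rows M) \<le> card {row a M, row b M}"
    by (rule dim_le_card) auto
  ultimately have "dim (rows M) = 2" using c2 by linarith
  then show ?thesis by (simp add: row_rank_def)
qed

lemma s_skew: "oriented_graph A \<Longrightarrow> skew_entry A u v = - skew_entry A v u"
  by (auto simp: skew_entry_def oriented_graph_def)

lemma s_nz: "skew_entry A u v \<noteq> 0 \<longleftrightarrow> underlying A u v"
  by (auto simp: skew_entry_def underlying_def)

lemma s_pm: "underlying A u v \<Longrightarrow> skew_entry A u v \<in> {-1,1}"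
  by (auto simp: skew_entry_def underlying_def)

lemma s_vals: "skew_entry A u v \<in> {-1,0,1}"
  by (auto simp: skew_entry_def)

lemma adj_entry: "skew_adj A $ i $ j = skew_entry A i j"
  by (simp add: skew_adj_def)

lemma und_sym: "underlying A u v = underlying A v u"
  by (auto simp: underlying_def)

lemma und_irr: "oriented_graph A \<Longrightarrow> \<not> underlying A u u"
  by (auto simp: underlying_def oriented_graph_def)

lemma ar4:
  fixes x y z w :: real
  shows "x\<in>{-1,1} \<Longrightarrow> y\<in>{-1,1} \<Longrightarrow> z\<in>{-1,1} \<Longrightarrow> w\<in>{-1,1} \<Longrightarrow> 0 < x*y*z*w \<Longrightarrow> x*y = z*w"
  by auto

lemma arK4:
  fixes x y z w p q :: real
  shows "x\<in>{-1,1} \<Longrightarrow> y\<in>{-1,1} \<Longrightarrow> z\<in>{-1,1} \<Longrightarrow> w\<in>{-1,1} \<Longrightarrow> p\<in>{-1,1} \<Longrightarrow> q\<in>{-1,1}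
    \<Longrightarrow> x*y \<noteq> z*w - p*q"
  by auto

lemma arC4:
  fixes x12 x23 x34 x41 x31 x42 :: real
  shows "x12\<in>{-1,1} \<Longrightarrow> x23\<in>{-1,1} \<Longrightarrow> x34\<in>{-1,1} \<Longrightarrow> x41\<in>{-1,1} \<Longrightarrow>
    x31 \<in> {-1,0,1} \<Longrightarrow> x42 \<in> {-1,0,1} \<Longrightarrow> x34*x12 = x31*x42 + x23*x41 \<Longrightarrow> 0 < x12*x23*x34*x41"
  by auto


theorem theorem3p3:
  fixes A :: "'n::finite \<Rightarrow> 'n \<Rightarrow> bool"
  assumes "oriented_graph A"
    and "connected_graph (underlying A)"
    and "CARD('n) \<ge> 5"
  shows "skew_rank A = 2 \<longleftrightarrow>
           ((complete_bipartite (underlying A) \<or> complete_tripartite (underlying A)) \<and>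
            (\<forall>u1 u2 u3 u4. is_4cycle A u1 u2 u3 u4 \<longrightarrow> evenly_oriented_4cycle A u1 u2 u3 u4))"
proof -
  let ?s = "skew_entry A"
  let ?E = "underlying A"
  let ?M = "skew_adj A"
  have sk: "\<And>u v. ?s u v = - ?s v u" by (rule s_skew[OF assms(1)])
  have Mskew: "\<And>i j. ?M$i$j = - ?M$j$i" unfolding adj_entry by (rule sk)
  have sym: "\<And>u v. ?E u v = ?E v u" by (rule und_sym)
  have irr: "\<And>u. \<not> ?E u u" by (rule und_irr[OF assms(1)])
  have nbr: "\<exists>w. ?E v w" for v
  proof -
    obtain u where uv: "u \<noteq> v"
    proof (rule ccontr)
      assume "\<not> thesis"
      then have "\<forall>u. u = v" using that by blast
      then have "(UNIV :: 'n set) = {v}" by auto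
      then have "CARD('n) = 1" using card_1_singleton_iff by fastforce
      then show False using assms(3) by simp
    qed
    have "?E\<^sup>*\<^sup>* v u" using assms(2) by (simp add: connected_graph_def)
    then show ?thesis using uv by (cases rule: converse_rtranclpE) auto
  qed
  show ?thesis
  proof
    assume rk: "skew_rank A = 2"
    have P: "?s i j * ?s a b = ?s i a * ?s j b - ?s i b * ?s j a" if ab: "?E a b" for a b i j
    proof -
      have h1: "?M$a$b \<noteq> 0" unfolding adj_entry using s_nz[of A a b] ab by simp
      have h2: "rank ?M \<le> 2" using rk by (simp add: skew_rank_def)
      have "?M$i$j * ?M$a$b = ?M$i$a * ?M$j$b - ?M$i$b * ?M$j$a"
        by (rule rank2_pluecker[OF Mskew h1 h2])
      then show ?thesis unfolding adj_entry .
    qed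
    have tr: "?E u v \<or> ?E v w" if uw: "?E u w" for u v w
    proof (rule ccontr)
      assume nn: "\<not> (?E u v \<or> ?E v w)"
      have z1: "?s v u = 0" "?s v w = 0" using s_nz[of A v u] s_nz[of A v w] sym[of u v] nn by auto
      have uw0: "?s u w \<noteq> 0" using uw s_nz[of A u w] by simp
      obtain j where vj: "?E v j" using nbr[of v] by blast
      have "?s v j * ?s u w = ?s v u * ?s j w - ?s v w * ?s j u" by (rule P[OF uw])
      then have "?s v j * ?s u w = 0" using z1 by simp
      then have "?s v j = 0" using uw0 by simp
      then show False using vj s_nz[of A v j] by simp
    qed
    have tr': "\<And>u v w. ?E u v \<or> ?E v w \<or> \<not> ?E u w" using tr by blast
    have noK4: "\<not> (?E a b \<and> ?E a c \<and> ?E a d \<and> ?E b c \<and> ?E b d \<and> ?E c d)" for a b c d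
    proof
      assume h: "?E a b \<and> ?E a c \<and> ?E a d \<and> ?E b c \<and> ?E b d \<and> ?E c d"
      have "?s c d * ?s a b = ?s c a * ?s d b - ?s c b * ?s d a" using h by (intro P) blast
      moreover have "?s c d * ?s a b \<noteq> ?s c a * ?s d b - ?s c b * ?s d a"
        by (rule arK4; rule s_pm; use h sym in blast)
      ultimately show False by simp
    qed
    have even: "\<forall>u1 u2 u3 u4. is_4cycle A u1 u2 u3 u4 \<longrightarrow> evenly_oriented_4cycle A u1 u2 u3 u4"
    proof (intro allI impI)
      fix u1 u2 u3 u4 assume cy: "is_4cycle A u1 u2 u3 u4"
      then have e: "?E u1 u2" "?E u2 u3" "?E u3 u4" "?E u4 u1" by (auto simp: is_4cycle_def)
      have p: "?s u3 u4 * ?s u1 u2 = ?s u3 u1 * ?s u4 u2 - ?s u3 u2 * ?s u4 u1" by (rule P[OF e(1)])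
      have t: "?s u3 u2 = - ?s u2 u3" by (rule sk)
      have "0 < ?s u1 u2 * ?s u2 u3 * ?s u3 u4 * ?s u4 u1"
      proof (rule arC4)
        show "?s u1 u2 \<in> {-1,1}" "?s u2 u3 \<in> {-1,1}" "?s u3 u4 \<in> {-1,1}" "?s u4 u1 \<in> {-1,1}"
          using e by (auto intro!: s_pm simp del: insert_iff)
        show "?s u3 u1 \<in> {-1,0,1}" "?s u4 u2 \<in> {-1,0,1}" by (rule s_vals)+
        show "?s u3 u4 * ?s u1 u2 = ?s u3 u1 * ?s u4 u2 + ?s u2 u3 * ?s u4 u1"
          using p unfolding t by simp
      qed
      then show "evenly_oriented_4cycle A u1 u2 u3 u4" by (simp add: evenly_oriented_4cycle_def)
    qed
    obtain a b where ab: "?E a b" using nbr by blast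
    have mp: "complete_bipartite ?E \<or> complete_tripartite ?E"
    proof (cases "\<exists>w. ?E a w \<and> ?E b w")
      case False
      define c where "c u = (if ?E a u then 1 else 0::nat)" for u
      have ca: "c a = 0" "c b = 1" using irr ab by (auto simp: c_def)
      have adj: "?E u v \<longleftrightarrow> c u \<noteq> c v" for u v
      proof (cases "?E a u"; cases "?E a v")
        assume "?E a u" "?E a v"
        then have "\<not> ?E b u" "\<not> ?E b v" using False by auto
        then show ?thesis using tr'[of u b v] sym[of u b] \<open>?E a u\<close> \<open>?E a v\<close> unfolding c_def by auto
      next
        assume "?E a u" "\<not> ?E a v"
        then show ?thesis using tr'[of a v u] sym[of v u] unfolding c_def by auto
      next
        assume "\<not> ?E a u" "?E a v"
        then show ?thesis using tr'[of a u v] unfolding c_def by auto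
      next
        assume "\<not> ?E a u" "\<not> ?E a v"
        then show ?thesis using tr'[of u a v] sym[of u a] unfolding c_def by auto
      qed
      have "range c = {0..<2}"
      proof
        show "range c \<subseteq> {0..<2}" by (auto simp: c_def)
        show "{0..<2} \<subseteq> range c"
        proof
          fix n :: nat assume "n \<in> {0..<2}"
          then have "n = c a \<or> n = c b" using ca by auto
          then show "n \<in> range c" by auto
        qed
      qed
      then show ?thesis using adj unfolding complete_multipartite_def by blast
    next
      case True
      then obtain w where w: "?E a w" "?E b w" by blast
      define c where "c u = (if \<not> ?E a u then 0 else if \<not> ?E b u then 1 else 2::nat)" for u
      have ca: "c a = 0" "c b = 1" "c w = 2" using irr ab w by (auto simp: c_def)
      have K: "\<not> ?E w u" if "?E a u" "?E b u" for u
        using noK4[of a b w u] that ab w by blast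
      have adj: "?E u v \<longleftrightarrow> c u \<noteq> c v" for u v
      proof (cases "?E a u"; cases "?E a v")
        assume "\<not> ?E a u" "\<not> ?E a v"
        then show ?thesis using tr'[of u a v] sym[of u a] unfolding c_def by auto
      next
        assume "?E a u" "\<not> ?E a v"
        then show ?thesis using tr'[of a v u] sym[of v u] unfolding c_def by auto
      next
        assume "\<not> ?E a u" "?E a v"
        then show ?thesis using tr'[of a u v] unfolding c_def by auto
      next
        assume au: "?E a u" and av: "?E a v"
        show ?thesis
        proof (cases "?E b u"; cases "?E b v")
          assume "?E b u" "?E b v"
          then show ?thesis using K[OF au] K[OF av] tr'[of u w v] sym[of u w] au av unfolding c_def by auto
        next
          assume "?E b u" "\<not> ?E b v"
          then show ?thesis using tr'[of b v u] sym[of v u] au av unfolding c_def by auto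
        next
          assume "\<not> ?E b u" "?E b v"
          then show ?thesis using tr'[of b u v] au av unfolding c_def by auto
        next
          assume "\<not> ?E b u" "\<not> ?E b v"
          then show ?thesis using tr'[of u b v] sym[of u b] au av unfolding c_def by auto
        qed
      qed
      have "range c = {0..<3}"
      proof
        show "range c \<subseteq> {0..<3}" by (auto simp: c_def)
        show "{0..<3} \<subseteq> range c"
        proof
          fix n :: nat assume "n \<in> {0..<3}"
          then have "n = c a \<or> n = c b \<or> n = c w" using ca by auto
          then show "n \<in> range c" by auto
        qed
      qed
      then show ?thesis using adj unfolding complete_multipartite_def by blast
    qed
    show "(complete_bipartite ?E \<or> complete_tripartite ?E) \<and>
      (\<forall>u1 u2 u3 u4. is_4cycle A u1 u2 u3 u4 \<longrightarrow> evenly_oriented_4cycle A u1 u2 u3 u4)"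
      using mp even by blast
  next
    assume H: "(complete_bipartite ?E \<or> complete_tripartite ?E) \<and>
      (\<forall>u1 u2 u3 u4. is_4cycle A u1 u2 u3 u4 \<longrightarrow> evenly_oriented_4cycle A u1 u2 u3 u4)"
    then obtain k c where k: "k = 2 \<or> k = 3" and rc: "range c = {0..<k}"
      and adjc: "\<And>u v. ?E u v \<longleftrightarrow> c u \<noteq> (c v :: nat)"
      unfolding complete_multipartite_def by blast
    have "0 \<in> range c" "1 \<in> range c" using rc k by auto
    then obtain a b where ca: "c a = 0" and cb: "c b = 1" by (metis imageE)
    have cr: "c u \<in> {0,1,2}" for u
    proof -
      have "c u \<in> {0..<k}" using rc by blast
      then show ?thesis using k by auto
    qed
    have z: "?s u v = 0 \<longleftrightarrow> c u = c v" for u v using s_nz[of A u v] adjc[of u v] by auto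
    have pm: "c u \<noteq> c v \<Longrightarrow> ?s u v \<in> {-1,1}" for u v using s_pm[of A u v] adjc[of u v] by auto
    have ev: "0 < ?s u1 u2 * ?s u2 u3 * ?s u3 u4 * ?s u4 u1"
      if "distinct [u1,u2,u3,u4]" "c u1 \<noteq> c u2" "c u2 \<noteq> c u3" "c u3 \<noteq> c u4" "c u4 \<noteq> c u1"
      for u1 u2 u3 u4
    proof -
      have "is_4cycle A u1 u2 u3 u4" using that adjc by (simp add: is_4cycle_def)
      then show ?thesis using H by (simp add: evenly_oriented_4cycle_def)
    qed
    have ab: "?E a b" using adjc[of a b] ca cb by simp
    have Pab: "?s i j * ?s a b = ?s i a * ?s j b - ?s i b * ?s j a" for i j
    proof -
      have ab_ne: "a \<noteq> b" using ca cb by auto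
      have saa: "?s a a = 0" "?s b b = 0" using z by auto
      have sab: "?s b a = - ?s a b" by (rule sk)
      consider "i = j" | "i = a" | "i = b" | "j = a" | "j = b" | "distinct [i,j,a,b]"
        using ab_ne by auto
      then show ?thesis
      proof cases
        case 1
        then show ?thesis using z[of j j] by (simp add: mult.commute)
      next
        case 2
        have t: "?s j a = - ?s a j" by (rule sk)
        show ?thesis using 2 saa(1) t by (simp add: algebra_simps)
      next
        case 3
        have t: "?s j b = - ?s b j" by (rule sk)
        show ?thesis using 3 saa(2) t sab by (simp add: algebra_simps)
      next
        case 4
        show ?thesis using 4 saa(1) by (simp add: algebra_simps)
      next
        case 5
        show ?thesis using 5 saa(2) sab by (simp add: algebra_simps)
      next
        case 6
        have ci: "c i \<in> {0,1,2}" "c j \<in> {0,1,2}" by (rule cr)+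
        have "c i = 0 \<and> c j = 0 \<or> c i = 1 \<and> c j = 1 \<or> c i = 2 \<and> c j = 2 \<or> c i = 0 \<and> c j \<noteq> 0
          \<or> c i \<noteq> 0 \<and> c j = 0 \<or> c i = 1 \<and> c j = 2 \<or> c i = 2 \<and> c j = 1" using ci by auto
        then show ?thesis
        proof (elim disjE conjE)
          assume h: "c i = 0" "c j = 0"
          then show ?thesis using z[of i j] z[of i a] z[of j a] ca by simp
        next
          assume h: "c i = 1" "c j = 1"
          then show ?thesis using z[of i j] z[of i b] z[of j b] cb by simp
        next
          assume h: "c i = 2" "c j = 2"
          have cyc: "0 < ?s i a * ?s a j * ?s j b * ?s b i"
            using ev[of i a j b] 6 h ca cb by auto
          have t: "?s a j = - ?s j a" "?s b i = - ?s i b" by (rule sk)+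
          have key: "?s i a * ?s j b = ?s i b * ?s j a"
          proof (rule ar4)
            show "?s i a \<in> {-1,1}" "?s j b \<in> {-1,1}" "?s i b \<in> {-1,1}" "?s j a \<in> {-1,1}"
              using h ca cb by (auto intro!: pm simp del: insert_iff)
            show "0 < ?s i a * ?s j b * ?s i b * ?s j a" using cyc unfolding t by (simp add: mult_ac)
          qed
          show ?thesis using key z[of i j] h by simp
        next
          assume h: "c i = 0" "c j \<noteq> 0"
          have cyc: "0 < ?s i j * ?s j a * ?s a b * ?s b i"
            using ev[of i j a b] 6 h ca cb by auto
          have t: "?s b i = - ?s i b" by (rule sk)+
          have key: "?s i j * ?s a b = (- ?s i b) * ?s j a"
          proof (rule ar4)
            have "?s i b \<in> {-1,1}" using h ca cb by (auto intro!: pm simp del: insert_iff)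
            then show "- ?s i b \<in> {-1,1}" by auto
            show "?s i j \<in> {-1,1}" "?s a b \<in> {-1,1}" "?s j a \<in> {-1,1}"
              using h ca cb by (auto intro!: pm simp del: insert_iff)
            show "0 < ?s i j * ?s a b * (- ?s i b) * ?s j a" using cyc unfolding t by (simp add: mult_ac)
          qed
          show ?thesis using key z[of i a] h ca by simp
        next
          assume h: "c i \<noteq> 0" "c j = 0"
          have cyc: "0 < ?s j i * ?s i a * ?s a b * ?s b j"
            using ev[of j i a b] 6 h ca cb by auto
          have t: "?s j i = - ?s i j" "?s b j = - ?s j b" by (rule sk)+
          have key: "?s i j * ?s a b = ?s i a * ?s j b"
          proof (rule ar4)
            show "?s i j \<in> {-1,1}" "?s a b \<in> {-1,1}" "?s i a \<in> {-1,1}" "?s j b \<in> {-1,1}"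
              using h ca cb by (auto intro!: pm simp del: insert_iff)
            show "0 < ?s i j * ?s a b * ?s i a * ?s j b" using cyc unfolding t by (simp add: mult_ac)
          qed
          show ?thesis using key z[of j a] h ca by simp
        next
          assume h: "c i = 1" "c j = 2"
          have cyc: "0 < ?s i j * ?s j b * ?s b a * ?s a i"
            using ev[of i j b a] 6 h ca cb by auto
          have t: "?s b a = - ?s a b" "?s a i = - ?s i a" by (rule sk)+
          have key: "?s i j * ?s a b = ?s i a * ?s j b"
          proof (rule ar4)
            show "?s i j \<in> {-1,1}" "?s a b \<in> {-1,1}" "?s i a \<in> {-1,1}" "?s j b \<in> {-1,1}"
              using h ca cb by (auto intro!: pm simp del: insert_iff)
            show "0 < ?s i j * ?s a b * ?s i a * ?s j b" using cyc unfolding t by (simp add: mult_ac)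
          qed
          show ?thesis using key z[of i b] h cb by simp
        next
          assume h: "c i = 2" "c j = 1"
          have cyc: "0 < ?s j i * ?s i b * ?s b a * ?s a j"
            using ev[of j i b a] 6 h ca cb by auto
          have t: "?s j i = - ?s i j" "?s b a = - ?s a b" "?s a j = - ?s j a" by (rule sk)+
          have key: "?s i j * ?s a b = (- ?s i b) * ?s j a"
          proof (rule ar4)
            have "?s i b \<in> {-1,1}" using h ca cb by (auto intro!: pm simp del: insert_iff)
            then show "- ?s i b \<in> {-1,1}" by auto
            show "?s i j \<in> {-1,1}" "?s a b \<in> {-1,1}" "?s j a \<in> {-1,1}"
              using h ca cb by (auto intro!: pm simp del: insert_iff)
            show "0 < ?s i j * ?s a b * (- ?s i b) * ?s j a" using cyc unfolding t by (simp add: mult_ac)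
          qed
          show ?thesis using key z[of j b] h cb by simp
        qed
      qed
    qed
    have "rank ?M = 2"
    proof (rule pluecker_rank2[OF Mskew])
      show "?M $ a $ b \<noteq> 0" unfolding adj_entry using s_nz[of A a b] ab by simp
      show "?M $ i $ j * ?M $ a $ b = ?M $ i $ a * ?M $ j $ b - ?M $ i $ b * ?M $ j $ a" for i j
        unfolding adj_entry by (rule Pab)
    qed
    then show "skew_rank A = 2" by (simp add: skew_rank_def)
  qed
qed

end
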